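(* Let $\beta>0$, $\beta_a>0$, $\alpha>0$ and $x_a\in[0,1]$, and consider the planar system on $\Gamma=[0,x_a]\times[0,1-x_a]$ \[ \frac{di_a}{dt}=F_a(i_a,i_r)\triangleq \beta(x_a-i_a)(i_a+i_r)-\beta_a(x_a-i_a)i_a-\alpha i_a, \qquad \frac{di_r}{dt}=F_r(i_a,i_r)\triangleq \beta(1-x_a-i_r)(i_a+i_r)-\beta_a(x_a-i_a)i_r-\alpha i_r, \] with initial condition $(i_a(0),i_r(0))\in\Gamma$. Then: (1) The infection-free equilibrium $(0,0)$ is globally asymptotically stable with respect to $\Gamma$ if and only if $\frac{\beta}{\alpha}\le 1+\frac{\beta_a x_a}{\alpha}$. (2) When $\frac{\beta}{\alpha}> 1+\frac{\beta_a x_a}{\alpha}$, there exists a unique interior equilibrium \[ \boldsymbol{i}^*=\Big(x_a\frac{\lambda_+}{\lambda_++\alpha},\;(1-x_a)\frac{\lambda_+}{\lambda_++\alpha}\Big),\qquad \lambda_+\triangleq \beta-\beta_a x_a-\alpha, \] and it is globally asymptotically stable with respect to $\Gamma$.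
   Context: This is the A-SIS model: a population of cyber nodes, a fixed fraction $x_a$ of which are active defenders; $i_a$ (resp. $i_r$) is the fraction of nodes that are infected active defenders (resp. infected non-active nodes), and $i=i_a+i_r$ is the total infected fraction. Let $\mathcal{E}=\{\boldsymbol{i}\in\Gamma: F_a(\boldsymbol{i})=F_r(\boldsymbol{i})=0\}$ be the set of equilibria. An equilibrium $\boldsymbol{i}^*\in\Gamma$ is called globally asymptotically stable with respect to $\Gamma$ if for every initial condition $\boldsymbol{i}_0\in\Gamma\setminus\mathcal{E}$ the solution $\boldsymbol{i}(t)$ converges to $\boldsymbol{i}^*$ as $t\to\infty$. An equilibrium is called interior if it lies in $(0,x_a)\times(0,1-x_a)$. *)

theory Defs
  imports "HOL-Analysis.Analysis"
begin

definition Fa :: "real \<Rightarrow> real \<Rightarrow> real \<Rightarrow> real \<Rightarrow> real \<Rightarrow> real \<Rightarrow> real" where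
  "Fa \<beta> \<beta>a \<alpha> xa ia ir = \<beta> * (xa - ia) * (ia + ir) - \<beta>a * (xa - ia) * ia - \<alpha> * ia"

definition Fr :: "real \<Rightarrow> real \<Rightarrow> real \<Rightarrow> real \<Rightarrow> real \<Rightarrow> real \<Rightarrow> real" where
  "Fr \<beta> \<beta>a \<alpha> xa ia ir = \<beta> * (1 - xa - ir) * (ia + ir) - \<beta>a * (xa - ia) * ir - \<alpha> * ir"

definition Gamma :: "real \<Rightarrow> (real \<times> real) set" where
  "Gamma xa = {0..xa} \<times> {0..1 - xa}"

definition equilibria :: "real \<Rightarrow> real \<Rightarrow> real \<Rightarrow> real \<Rightarrow> (real \<times> real) set" where
  "equilibria \<beta> \<beta>a \<alpha> xa =
     {p \<in> Gamma xa. Fa \<beta> \<beta>a \<alpha> xa (fst p) (snd p) = 0 \<and> Fr \<beta> \<beta>a \<alpha> xa (fst p) (snd p) = 0}"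

definition is_solution :: "real \<Rightarrow> real \<Rightarrow> real \<Rightarrow> real \<Rightarrow> real \<times> real \<Rightarrow> (real \<Rightarrow> real \<times> real) \<Rightarrow> bool" where
  "is_solution \<beta> \<beta>a \<alpha> xa i0 i \<longleftrightarrow> i 0 = i0 \<and>
     (\<forall>t\<ge>0. (i has_vector_derivative
        (Fa \<beta> \<beta>a \<alpha> xa (fst (i t)) (snd (i t)), Fr \<beta> \<beta>a \<alpha> xa (fst (i t)) (snd (i t))))
        (at t within {0..}))"

definition GAS :: "real \<Rightarrow> real \<Rightarrow> real \<Rightarrow> real \<Rightarrow> real \<times> real \<Rightarrow> bool" where
  "GAS \<beta> \<beta>a \<alpha> xa p \<longleftrightarrow> p \<in> equilibria \<beta> \<beta>a \<alpha> xa \<and>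
     (\<forall>i0 \<in> Gamma xa - equilibria \<beta> \<beta>a \<alpha> xa. \<forall>i. is_solution \<beta> \<beta>a \<alpha> xa i0 i \<longrightarrow>
        (i \<longlongrightarrow> p) at_top)"

definition interior_pts :: "real \<Rightarrow> (real \<times> real) set" where
  "interior_pts xa = {0<..<xa} \<times> {0<..<1 - xa}"

end

theory Submission imports Defs "HOL-Real_Asymp.Real_Asymp" begin

lemma vd_fst:
  fixes f :: "real \<Rightarrow> real \<times> real" and a b :: real
  assumes "(f has_vector_derivative (a,b)) (at t within S)"
  shows "((\<lambda>t. fst (f t)) has_real_derivative a) (at t within S)"
proof -
  have "((\<lambda>t. fst (f t)) has_derivative (\<lambda>h. fst (h *\<^sub>R (a,b)))) (at t within S)"
    using assms unfolding has_vector_derivative_def by (rule has_derivative_fst)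
  moreover have "(\<lambda>h. h * a) = (*) a" "(\<lambda>h. h * b) = (*) b" by (auto simp: fun_eq_iff)
  ultimately show ?thesis unfolding has_field_derivative_def by simp
qed

lemma vd_snd:
  fixes f :: "real \<Rightarrow> real \<times> real" and a b :: real
  assumes "(f has_vector_derivative (a,b)) (at t within S)"
  shows "((\<lambda>t. snd (f t)) has_real_derivative b) (at t within S)"
proof -
  have "((\<lambda>t. snd (f t)) has_derivative (\<lambda>h. snd (h *\<^sub>R (a,b)))) (at t within S)"
    using assms unfolding has_vector_derivative_def by (rule has_derivative_snd)
  moreover have "(\<lambda>h. h * a) = (*) a" "(\<lambda>h. h * b) = (*) b" by (auto simp: fun_eq_iff)
  ultimately show ?thesis unfolding has_field_derivative_def by simp
qed

lemma exp_rep: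
  fixes f g :: "real \<Rightarrow> real"
  assumes d: "\<And>t. t \<in> {0..T} \<Longrightarrow> (f has_real_derivative f t * g t) (at t within {0..T})"
    and c: "continuous_on {0..T} g" and T: "T \<ge> 0"
  shows "f T = f 0 * exp (integral {0..T} g)"
proof -
  define G where "G = (\<lambda>u. integral {0..u} g)"
  have dG: "(G has_real_derivative g t) (at t within {0..T})" if "t \<in> {0..T}" for t
    unfolding G_def using integral_has_real_derivative[OF c that] .
  have "\<exists>k. \<forall>x\<in>{0..T}. f x * exp (- G x) = k"
  proof (rule has_field_derivative_zero_constant)
    fix x assume x: "x \<in> {0..T}"
    have e: "((\<lambda>x. exp (- G x)) has_real_derivative exp (- G x) * (- g x)) (at x within {0..T})"
      by (auto intro!: derivative_eq_intros dG[OF x])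
    have "((\<lambda>x. f x * exp (- G x)) has_real_derivative
           f x * (exp (- G x) * (- g x)) + (f x * g x) * exp (- G x)) (at x within {0..T})"
      by (rule DERIV_mult'[OF d[OF x] e])
    then show "((\<lambda>x. f x * exp (- G x)) has_real_derivative 0) (at x within {0..T})"
      by (simp add: algebra_simps)
  qed auto
  then obtain k where k: "\<forall>x\<in>{0..T}. f x * exp (- G x) = k" by blast
  have "G 0 = 0" by (simp add: G_def)
  then have "f 0 = k" using k T by force
  with k T have "f T * exp (- G T) = f 0" by auto
  then show ?thesis by (simp add: G_def exp_minus field_simps)
qed

lemma l1: "(lp::real) > 0 \<Longrightarrow> (\<beta>::real) > 0 \<Longrightarrow> ((\<lambda>t. exp(-(lp*t)) * W + b * (1 - exp(-(lp*t)))/lp + K * exp(-(\<beta>*t))) \<longlongrightarrow> b * inverse lp) at_top"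
  by real_asymp
lemma l2: "(a::real) > 0 \<Longrightarrow> (\<beta>::real) > 0 \<Longrightarrow> filterlim (\<lambda>t. W + a * t + K * exp(-(\<beta>*t))) at_top at_top"
  by real_asymp
lemma l3: "(lp::real) < 0 \<Longrightarrow> C > 0 \<Longrightarrow> (\<beta>::real) > 0 \<Longrightarrow> filterlim (\<lambda>t. exp(-(lp*t)) * C + M + K * exp(-(\<beta>*t))) at_top at_top"
  by real_asymp
lemma l4: "(lp::real) < 0 \<Longrightarrow> C < 0 \<Longrightarrow> (\<beta>::real) > 0 \<Longrightarrow> filterlim (\<lambda>t. exp(-(lp*t)) * C + M + K * exp(-(\<beta>*t))) at_bot at_top"
  by real_asymp
lemma l5: "(\<beta>::real) > 0 \<Longrightarrow> ((\<lambda>t. M + K * exp(-(\<beta>*t))) \<longlongrightarrow> M) at_top"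
  by real_asymp
lemma l6: "(\<beta>::real) > 0 \<Longrightarrow> ((\<lambda>t. exp(-(\<beta>*t))) \<longlongrightarrow> 0) at_top"
  by real_asymp

lemma aux1:
  fixes u v W b lp :: real
  assumes "u * v = 1" "lp \<noteq> 0"
  shows "u * (W + b * ((v - 1) / lp)) = u * (W - b / lp) + b / lp"
proof -
  have "u * (W + b * ((v - 1) / lp)) = u * W + b * (u * v) / lp - u * b / lp"
    by (simp add: algebra_simps diff_divide_distrib)
  also have "\<dots> = u * (W - b / lp) + b / lp" using assms(1) by (simp add: algebra_simps diff_divide_distrib)
  finally show ?thesis .
qed
lemma aux2:
  fixes u v W b lp :: real
  assumes "u * v = 1" "lp \<noteq> 0"
  shows "u * (W + b * ((v - 1) / lp)) = u * W + b * (1 - u) / lp"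
  using aux1[OF assms] by (simp add: algebra_simps diff_divide_distrib)

lemma comp_nonneg:
  fixes f h fd :: "real \<Rightarrow> real"
  assumes d: "\<And>t. t \<in> {0..T} \<Longrightarrow> (f has_real_derivative fd t) (at t within {0..T})"
    and ineq: "\<And>t. t \<in> {0..T} \<Longrightarrow> fd t + h t * f t \<ge> 0"
    and c: "continuous_on {0..T} h" and T: "T \<ge> 0" and f0: "f 0 \<ge> 0"
  shows "f T \<ge> 0"
proof -
  define G where "G = (\<lambda>u. integral {0..u} h)"
  have dG: "(G has_real_derivative h t) (at t within {0..T})" if "t \<in> {0..T}" for t
    unfolding G_def using integral_has_real_derivative[OF c that] .
  define F where "F = (\<lambda>x. f x * exp (G x))"
  have dF: "(F has_real_derivative f x * (exp (G x) * h x) + fd x * exp (G x)) (at x within {0..T})"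
    if x: "x \<in> {0..T}" for x
  proof -
    have e: "((\<lambda>x. exp (G x)) has_real_derivative exp (G x) * h x) (at x within {0..T})"
      by (auto intro!: derivative_eq_intros dG[OF x])
    show ?thesis unfolding F_def by (rule DERIV_mult'[OF d[OF x] e])
  qed
  have nn: "f x * (exp (G x) * h x) + fd x * exp (G x) \<ge> 0" if "x \<in> {0..T}" for x
  proof -
    have "f x * (exp (G x) * h x) + fd x * exp (G x) = (fd x + h x * f x) * exp (G x)"
      by (simp add: algebra_simps)
    then show ?thesis using ineq[OF that] by simp
  qed
  have "F 0 \<le> F T"
  proof (rule DERIV_nonneg_imp_increasing_open[OF T])
    fix x assume x: "0 < x" "x < T"
    then have xi: "x \<in> interior {0..T}" by simp
    have "(F has_real_derivative f x * (exp (G x) * h x) + fd x * exp (G x)) (at x)"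
      using dF[of x] x at_within_interior[OF xi] by simp
    then show "\<exists>y. (F has_real_derivative y) (at x) \<and> 0 \<le> y" using nn[of x] x by auto
  next
    show "continuous_on {0..T} F" by (rule DERIV_continuous_on[OF dF])
  qed
  moreover have "F 0 = f 0" by (simp add: F_def G_def)
  ultimately have "f T * exp (G T) \<ge> 0" using f0 unfolding F_def by linarith
  then show ?thesis by (simp add: zero_le_mult_iff)
qed

lemma E_deriv:
  fixes lp :: real
  shows "((\<lambda>t. if lp = 0 then t else (exp (lp * t) - 1) / lp) has_real_derivative exp (lp * t)) (at t within S)"
proof (cases "lp = 0")
  case True then show ?thesis by (auto intro!: derivative_eq_intros)
next
  case False then show ?thesis by (auto intro!: derivative_eq_intros)
qed

lemma sol_main:
  fixes \<beta> \<beta>a \<alpha> xa :: real and i :: "real \<Rightarrow> real \<times> real"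
  assumes pos: "\<beta> > 0" "\<beta>a > 0" "\<alpha> > 0" "0 \<le> xa" "xa \<le> 1"
    and sol: "is_solution \<beta> \<beta>a \<alpha> xa i0 i"
    and i0G: "i0 \<in> Gamma xa" and nz: "i0 \<noteq> (0,0)"
  shows "\<exists>L. (L = (if \<beta> - \<beta>a * xa - \<alpha> > 0 then (\<beta> - \<beta>a * xa - \<alpha>) / (\<beta> - \<beta>a * xa) else 0))
     \<and> (i \<longlongrightarrow> (xa * L, (1 - xa) * L)) at_top"
proof -
  define ia where "ia = (\<lambda>t. fst (i t))"
  define ir where "ir = (\<lambda>t. snd (i t))"
  define I where "I = (\<lambda>t. ia t + ir t)"
  define D where "D = (\<lambda>t. (1 - xa) * ia t - xa * ir t)"
  define lp where "lp = \<beta> - \<beta>a * xa - \<alpha>"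
  define b where "b = \<beta> - \<beta>a * xa"
  have b_lp: "b = lp + \<alpha>" by (simp add: b_def lp_def)
  have bx: "\<beta>a * xa \<ge> 0" using pos by simp
  have blp: "\<beta> - lp > 0" using pos(3) bx unfolding lp_def by linarith
  have vd: "(i has_vector_derivative (Fa \<beta> \<beta>a \<alpha> xa (ia t) (ir t), Fr \<beta> \<beta>a \<alpha> xa (ia t) (ir t))) (at t within {0..})"
    if "t \<ge> 0" for t using sol that unfolding is_solution_def ia_def ir_def by auto
  have dia: "(ia has_real_derivative Fa \<beta> \<beta>a \<alpha> xa (ia t) (ir t)) (at t within {0..})"
    if "t \<ge> 0" for t using vd_fst[OF vd[OF that]] unfolding ia_def .
  have dir: "(ir has_real_derivative Fr \<beta> \<beta>a \<alpha> xa (ia t) (ir t)) (at t within {0..})"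
    if "t \<ge> 0" for t using vd_snd[OF vd[OF that]] unfolding ir_def .
  have i0: "i 0 = i0" using sol unfolding is_solution_def by auto
  have I0: "I 0 > 0"
  proof -
    have "fst i0 \<ge> 0" "snd i0 \<ge> 0" using i0G unfolding Gamma_def by (auto simp: mem_Times_iff)
    moreover have "\<not> (fst i0 = 0 \<and> snd i0 = 0)" using nz by (metis prod.collapse)
    ultimately show ?thesis unfolding I_def ia_def ir_def i0 by auto
  qed
  define g where "g = (\<lambda>t. \<beta> * (1 - I t) - \<beta>a * (xa - ia t) - \<alpha>)"
  have dI: "(I has_real_derivative I t * g t) (at t within {0..})" if "t \<ge> 0" for t
  proof -
    have "(I has_real_derivative Fa \<beta> \<beta>a \<alpha> xa (ia t) (ir t) + Fr \<beta> \<beta>a \<alpha> xa (ia t) (ir t)) (at t within {0..})"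
      unfolding I_def by (intro DERIV_add dia dir that)
    moreover have "Fa \<beta> \<beta>a \<alpha> xa (ia t) (ir t) + Fr \<beta> \<beta>a \<alpha> xa (ia t) (ir t) = I t * g t"
      unfolding Fa_def Fr_def I_def g_def by (simp add: algebra_simps)
    ultimately show ?thesis by simp
  qed
  have Ipos: "I t > 0" if "t \<ge> 0" for t
  proof -
    have ct1: "continuous_on {0..t} ia"
      by (rule DERIV_continuous_on, rule DERIV_subset[OF dia], auto)
    have ct2: "continuous_on {0..t} ir"
      by (rule DERIV_continuous_on, rule DERIV_subset[OF dir], auto)
    note ct = ct1 ct2
    have cg: "continuous_on {0..t} g" unfolding g_def I_def using ct by (intro continuous_intros)
    have "I t = I 0 * exp (integral {0..t} g)"
      by (rule exp_rep[OF _ cg that]) (rule DERIV_subset[OF dI], auto)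
    then show ?thesis using I0 by simp
  qed
  define q0 where "q0 = D 0 / I 0"
  have Qc: "D t * exp (\<beta> * t) / I t = q0" if "t \<ge> 0" for t
  proof -
    have "\<exists>c. \<forall>x\<in>{0..}. D x * exp (\<beta> * x) / I x = c"
    proof (rule has_field_derivative_zero_constant)
      fix x :: real assume x: "x \<in> {0..}"
      then have x0: "x \<ge> 0" by simp
      have dD: "(D has_real_derivative (1 - xa) * Fa \<beta> \<beta>a \<alpha> xa (ia x) (ir x) - xa * Fr \<beta> \<beta>a \<alpha> xa (ia x) (ir x)) (at x within {0..})"
        unfolding D_def by (auto intro!: derivative_eq_intros dia dir x0)
      have dex: "((\<lambda>x. exp (\<beta> * x)) has_real_derivative exp (\<beta> * x) * \<beta>) (at x within {0..})"
        by (auto intro!: derivative_eq_intros)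
      have Ix: "I x \<noteq> 0" using Ipos[OF x0] by simp
      have "((\<lambda>x. D x * exp (\<beta> * x) / I x) has_real_derivative
          ((D x * (exp (\<beta> * x) * \<beta>) + ((1 - xa) * Fa \<beta> \<beta>a \<alpha> xa (ia x) (ir x) - xa * Fr \<beta> \<beta>a \<alpha> xa (ia x) (ir x)) * exp (\<beta> * x)) * I x
           - D x * exp (\<beta> * x) * (I x * g x)) / (I x * I x)) (at x within {0..})"
        by (rule DERIV_divide[OF DERIV_mult'[OF dD dex] dI[OF x0] Ix])
      moreover have "(D x * (exp (\<beta> * x) * \<beta>) + ((1 - xa) * Fa \<beta> \<beta>a \<alpha> xa (ia x) (ir x) - xa * Fr \<beta> \<beta>a \<alpha> xa (ia x) (ir x)) * exp (\<beta> * x)) * I x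
           - D x * exp (\<beta> * x) * (I x * g x) = 0"
        unfolding Fa_def Fr_def D_def g_def I_def by (simp add: algebra_simps)
      ultimately show "((\<lambda>x. D x * exp (\<beta> * x) / I x) has_real_derivative 0) (at x within {0..})"
        by simp
    qed simp
    then obtain c where c: "\<forall>x\<in>{0..}. D x * exp (\<beta> * x) / I x = c" by blast
    then have "c = q0" unfolding q0_def by (metis atLeast_iff exp_zero mult_1_right mult_zero_right order_refl)
    with c that show ?thesis by auto
  qed
  have Dq: "D t = q0 * exp (- (\<beta> * t)) * I t" if "t \<ge> 0" for t
    using Qc[OF that] Ipos[OF that] by (simp add: exp_minus field_simps)
  define E where "E = (\<lambda>t. if lp = 0 then t else (exp (lp * t) - 1) / lp)"
  define W0 where "W0 = 1 / I 0 - \<beta>a * q0 / (\<beta> - lp)"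
  have geq: "g x = lp - b * I x + \<beta>a * D x" for x
    by (simp add: g_def I_def D_def b_def lp_def algebra_simps)
  have Wc: "exp (lp * t) / I t - b * E t - \<beta>a * q0 * exp ((lp - \<beta>) * t) / (\<beta> - lp) = W0"
    if "t \<ge> 0" for t
  proof -
    have "\<exists>c. \<forall>x\<in>{0..}. exp (lp * x) / I x - b * E x - \<beta>a * q0 * exp ((lp - \<beta>) * x) / (\<beta> - lp) = c"
    proof (rule has_field_derivative_zero_constant)
      fix x :: real assume x: "x \<in> {0..}"
      then have x0: "x \<ge> 0" by simp
      have dE: "(E has_real_derivative exp (lp * x)) (at x within {0..})"
        unfolding E_def by (rule E_deriv)
      have Ix: "I x \<noteq> 0" using Ipos[OF x0] by simp
      have d1: "((\<lambda>x. exp (lp * x)) has_real_derivative exp (lp * x) * lp) (at x within {0..})"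
        by (auto intro!: derivative_eq_intros)
      have d2: "((\<lambda>x. \<beta>a * q0 * exp ((lp - \<beta>) * x) / (\<beta> - lp)) has_real_derivative \<beta>a * q0 * (exp ((lp - \<beta>) * x) * (lp - \<beta>)) / (\<beta> - lp)) (at x within {0..})"
        using blp by (auto intro!: derivative_eq_intros)
      have "((\<lambda>x. exp (lp * x) / I x - b * E x - \<beta>a * q0 * exp ((lp - \<beta>) * x) / (\<beta> - lp)) has_real_derivative
          ((exp (lp * x) * lp) * I x - exp (lp * x) * (I x * g x)) / (I x * I x)
          - b * exp (lp * x) - \<beta>a * q0 * (exp ((lp - \<beta>) * x) * (lp - \<beta>)) / (\<beta> - lp)) (at x within {0..})"
        by (intro DERIV_diff DERIV_divide[OF d1 dI[OF x0] Ix] DERIV_cmult dE d2)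
      moreover have "((exp (lp * x) * lp) * I x - exp (lp * x) * (I x * g x)) / (I x * I x)
          - b * exp (lp * x) - \<beta>a * q0 * (exp ((lp - \<beta>) * x) * (lp - \<beta>)) / (\<beta> - lp) = 0"
      proof -
        have e: "exp ((lp - \<beta>) * x) = exp (lp * x) * exp (- (\<beta> * x))"
          by (simp add: algebra_simps flip: exp_add)
        have "I x \<noteq> 0" using Ipos[OF x0] by simp
        then show ?thesis using blp unfolding geq Dq[OF x0] e by (simp add: field_simps)
      qed
      ultimately show "((\<lambda>x. exp (lp * x) / I x - b * E x - \<beta>a * q0 * exp ((lp - \<beta>) * x) / (\<beta> - lp)) has_real_derivative 0) (at x within {0..})"
        by simp
    qed simp
    then obtain c where c: "\<forall>x\<in>{0..}. exp (lp * x) / I x - b * E x - \<beta>a * q0 * exp ((lp - \<beta>) * x) / (\<beta> - lp) = c" by blast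
    have "c = W0" using c[rule_format, of 0] unfolding W0_def E_def by (auto split: if_splits)
    with c that show ?thesis by auto
  qed
  have form: "1 / I t = exp (- (lp * t)) * (W0 + b * E t) + \<beta>a * q0 * exp (- (\<beta> * t)) / (\<beta> - lp)"
    if "t \<ge> 0" for t
  proof -
    have e: "exp ((lp - \<beta>) * t) = exp (lp * t) * exp (- (\<beta> * t))"
      by (simp add: algebra_simps flip: exp_add)
    have "exp (lp * t) / I t = W0 + b * E t + \<beta>a * q0 * exp ((lp - \<beta>) * t) / (\<beta> - lp)"
      using Wc[OF that] by simp
    then have "exp (- (lp * t)) * (exp (lp * t) / I t) = exp (- (lp * t)) * (W0 + b * E t + \<beta>a * q0 * exp ((lp - \<beta>) * t) / (\<beta> - lp))"
      by simp
    then show ?thesis unfolding e by (simp add: field_simps exp_minus)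
  qed
  have i0b: "0 \<le> ia 0" "ia 0 \<le> xa" "0 \<le> ir 0" "ir 0 \<le> 1 - xa"
    using i0G unfolding Gamma_def ia_def ir_def i0 by (auto simp: mem_Times_iff)
  have q0lo: "q0 \<ge> - xa"
  proof -
    have "D 0 + xa * I 0 = ia 0" unfolding D_def I_def by (simp add: algebra_simps)
    then have "- xa * I 0 \<le> D 0" using i0b by linarith
    then show ?thesis unfolding q0_def using I0 by (simp add: pos_le_divide_eq)
  qed
  have q0hi: "q0 \<le> 1 - xa"
  proof -
    have "(1 - xa) * I 0 - D 0 = ir 0" unfolding D_def I_def by (simp add: algebra_simps)
    then have "D 0 \<le> (1 - xa) * I 0" using i0b by linarith
    then show ?thesis unfolding q0_def using I0 by (simp add: pos_divide_le_eq)
  qed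
  have iaeq: "ia t = I t * (xa + q0 * exp (- (\<beta> * t)))" if "t \<ge> 0" for t
  proof -
    have "ia t = xa * I t + D t" unfolding I_def D_def by (simp add: algebra_simps)
    then show ?thesis using Dq[OF that] by (simp add: algebra_simps)
  qed
  have ireq: "ir t = I t * (1 - xa - q0 * exp (- (\<beta> * t)))" if "t \<ge> 0" for t
  proof -
    have "ir t = (1 - xa) * I t - D t" unfolding I_def D_def by (simp add: algebra_simps)
    then show ?thesis using Dq[OF that] by (simp add: algebra_simps)
  qed
  have eb: "0 \<le> exp (- (\<beta> * t))" "exp (- (\<beta> * t)) \<le> 1" if "t \<ge> 0" for t
    using that pos(1) by auto
  have ia_nn: "ia t \<ge> 0" if "t \<ge> 0" for t
  proof -
    have "q0 * exp (- (\<beta> * t)) \<ge> - xa * exp (- (\<beta> * t))"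
      using mult_right_mono[OF q0lo eb(1)[OF that]] by simp
    moreover have "xa * exp (- (\<beta> * t)) \<le> xa" using eb[OF that] pos(4) by (simp add: mult_left_le)
    ultimately have "xa + q0 * exp (- (\<beta> * t)) \<ge> 0" by linarith
    then show ?thesis using iaeq[OF that] Ipos[OF that] by simp
  qed
  have ir_nn: "ir t \<ge> 0" if "t \<ge> 0" for t
  proof -
    have "q0 * exp (- (\<beta> * t)) \<le> (1 - xa) * exp (- (\<beta> * t))"
      using mult_right_mono[OF q0hi eb(1)[OF that]] by simp
    moreover have "(1 - xa) * exp (- (\<beta> * t)) \<le> 1 - xa" using eb[OF that] pos(5) by (simp add: mult_left_le)
    ultimately have "1 - xa - q0 * exp (- (\<beta> * t)) \<ge> 0" by linarith
    then show ?thesis using ireq[OF that] Ipos[OF that] by simp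
  qed
  have cia: "continuous_on {0..} ia" by (rule DERIV_continuous_on[OF dia]) simp
  have cir: "continuous_on {0..} ir" by (rule DERIV_continuous_on[OF dir]) simp
  have cia': "continuous_on {0..t} ia" "continuous_on {0..t} ir" for t
    by (rule continuous_on_subset[OF cia], force) (rule continuous_on_subset[OF cir], force)
  have ia_le: "ia t \<le> xa" if "t \<ge> 0" for t
  proof -
    have "0 \<le> xa - ia t"
    proof (rule comp_nonneg[where f = "\<lambda>s. xa - ia s" and fd = "\<lambda>s. - Fa \<beta> \<beta>a \<alpha> xa (ia s) (ir s)"
          and h = "\<lambda>s. \<beta> * I s - \<beta>a * ia s", OF _ _ _ that])
      fix s assume s: "s \<in> {0..t}"
      show "((\<lambda>s. xa - ia s) has_real_derivative - Fa \<beta> \<beta>a \<alpha> xa (ia s) (ir s)) (at s within {0..t})"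
      proof -
        have "((\<lambda>s. xa - ia s) has_real_derivative 0 - Fa \<beta> \<beta>a \<alpha> xa (ia s) (ir s)) (at s within {0..})"
          by (rule DERIV_diff[OF DERIV_const dia]) (use s in auto)
        then have "((\<lambda>s. xa - ia s) has_real_derivative 0 - Fa \<beta> \<beta>a \<alpha> xa (ia s) (ir s)) (at s within {0..t})"
          by (rule DERIV_subset) auto
        then show ?thesis by simp
      qed
      have "- Fa \<beta> \<beta>a \<alpha> xa (ia s) (ir s) + (\<beta> * I s - \<beta>a * ia s) * (xa - ia s) = \<alpha> * ia s"
        unfolding Fa_def I_def by (simp add: algebra_simps)
      then show "0 \<le> - Fa \<beta> \<beta>a \<alpha> xa (ia s) (ir s) + (\<beta> * I s - \<beta>a * ia s) * (xa - ia s)"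
        using ia_nn[of s] s pos(3) by simp
    next
      show "continuous_on {0..t} (\<lambda>s. \<beta> * I s - \<beta>a * ia s)"
        unfolding I_def using cia' by (intro continuous_intros)
    next
      show "0 \<le> xa - ia 0" using i0b by simp
    qed
    then show ?thesis by simp
  qed
  have ir_le: "ir t \<le> 1 - xa" if "t \<ge> 0" for t
  proof -
    have "0 \<le> 1 - xa - ir t"
    proof (rule comp_nonneg[where f = "\<lambda>s. 1 - xa - ir s" and fd = "\<lambda>s. - Fr \<beta> \<beta>a \<alpha> xa (ia s) (ir s)"
          and h = "\<lambda>s. \<beta> * I s", OF _ _ _ that])
      fix s assume s: "s \<in> {0..t}"
      show "((\<lambda>s. 1 - xa - ir s) has_real_derivative - Fr \<beta> \<beta>a \<alpha> xa (ia s) (ir s)) (at s within {0..t})"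
      proof -
        have "((\<lambda>s. 1 - xa - ir s) has_real_derivative 0 - Fr \<beta> \<beta>a \<alpha> xa (ia s) (ir s)) (at s within {0..})"
          by (rule DERIV_diff[OF DERIV_const dir]) (use s in auto)
        then have "((\<lambda>s. 1 - xa - ir s) has_real_derivative 0 - Fr \<beta> \<beta>a \<alpha> xa (ia s) (ir s)) (at s within {0..t})"
          by (rule DERIV_subset) auto
        then show ?thesis by simp
      qed
      have "- Fr \<beta> \<beta>a \<alpha> xa (ia s) (ir s) + (\<beta> * I s) * (1 - xa - ir s) = \<beta>a * (xa - ia s) * ir s + \<alpha> * ir s"
        unfolding Fr_def I_def by (simp add: algebra_simps)
      moreover have "\<beta>a * (xa - ia s) * ir s \<ge> 0" using ia_le[of s] ir_nn[of s] s pos(2) by simp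
      moreover have "\<alpha> * ir s \<ge> 0" using ir_nn[of s] s pos(3) by simp
      ultimately show "0 \<le> - Fr \<beta> \<beta>a \<alpha> xa (ia s) (ir s) + (\<beta> * I s) * (1 - xa - ir s)"
        by linarith
    next
      show "continuous_on {0..t} (\<lambda>s. \<beta> * I s)"
        unfolding I_def using cia' by (intro continuous_intros)
    next
      show "0 \<le> 1 - xa - ir 0" using i0b by simp
    qed
    then show ?thesis by simp
  qed
  have Ile1: "I t \<le> 1" if "t \<ge> 0" for t
    using ia_le[OF that] ir_le[OF that] unfolding I_def by simp
  have inv_ge1: "1 / I t \<ge> 1" if "t \<ge> 0" for t
    using Ile1[OF that] Ipos[OF that] by simp
  define K where "K = \<beta>a * q0 / (\<beta> - lp)"
  define L where "L = (if lp > 0 then lp / b else 0)"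
  have ev: "eventually (\<lambda>t::real. t \<ge> 0) at_top" by (rule eventually_ge_at_top)
  have bpos: "b > 0" if "lp \<ge> 0" using that pos b_lp by simp
  have IL: "(I \<longlongrightarrow> L) at_top"
  proof (cases "lp > 0")
    case True
    have "((\<lambda>t. 1 / I t) \<longlongrightarrow> b * inverse lp) at_top"
    proof -
      have lim1: "((\<lambda>t. exp(-(lp*t)) * W0 + b * (1 - exp(-(lp*t)))/lp + K * exp(-(\<beta>*t))) \<longlongrightarrow> b * inverse lp) at_top"
        by (rule l1[OF True pos(1)])
      have "eventually (\<lambda>t. exp(-(lp*t)) * W0 + b * (1 - exp(-(lp*t)))/lp + K * exp(-(\<beta>*t)) = 1 / I t) at_top"
        using ev
      proof eventually_elim
        case (elim t)
        have uv: "exp (- (lp * t)) * exp (lp * t) = 1" by (simp flip: exp_add)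
        have lp0: "lp \<noteq> 0" using True by simp
        have Et: "E t = (exp (lp * t) - 1) / lp" using lp0 by (simp add: E_def)
        have "1 / I t = exp (- (lp * t)) * W0 + b * (1 - exp (- (lp * t))) / lp + \<beta>a * q0 * exp (- (\<beta> * t)) / (\<beta> - lp)"
          using form[OF elim] unfolding Et aux2[OF uv lp0] .
        then show ?case by (simp add: K_def)
      qed
      with lim1 show ?thesis by (rule Lim_transform_eventually)
    qed
    then have "((\<lambda>t. inverse (1 / I t)) \<longlongrightarrow> inverse (b * inverse lp)) at_top"
      by (rule tendsto_inverse) (use True bpos in simp)
    moreover have "inverse (b * inverse lp) = L" using True unfolding L_def
      by (simp add: inverse_mult_distrib divide_inverse mult.commute)
    moreover have "(\<lambda>t. inverse (1 / I t)) = I" by (simp add: fun_eq_iff)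
    ultimately show ?thesis by simp
  next
    case False
    have "filterlim (\<lambda>t. 1 / I t) at_top at_top"
    proof (cases "lp = 0")
      case True
      have lim0: "filterlim (\<lambda>t. W0 + b * t + K * exp(-(\<beta>*t))) at_top at_top"
        by (rule l2) (use bpos True pos in auto)
      have eq0: "eventually (\<lambda>t. W0 + b * t + K * exp(-(\<beta>*t)) = 1 / I t) at_top"
        using ev
      proof eventually_elim
        case (elim t)
        have "1 / I t = W0 + b * t + \<beta>a * q0 * exp (- (\<beta> * t)) / \<beta>"
          using form[OF elim] True by (simp add: E_def)
        then show ?case by (simp add: K_def True)
      qed
      show ?thesis using lim0 by (rule filterlim_cong[OF refl refl eq0, THEN iffD1])
    next
      case False
      with \<open>\<not> lp > 0\<close> have neg: "lp < 0" by simp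
      define C where "C = W0 - b / lp"
      have eq: "eventually (\<lambda>t. exp(-(lp*t)) * C + b / lp + K * exp(-(\<beta>*t)) = 1 / I t) at_top"
        using ev
      proof eventually_elim
        case (elim t)
        have uv: "exp (- (lp * t)) * exp (lp * t) = 1" by (simp flip: exp_add)
        have lp0: "lp \<noteq> 0" using neg by simp
        have Et: "E t = (exp (lp * t) - 1) / lp" using lp0 by (simp add: E_def)
        have "1 / I t = exp (- (lp * t)) * (W0 - b / lp) + b / lp + \<beta>a * q0 * exp (- (\<beta> * t)) / (\<beta> - lp)"
          using form[OF elim] unfolding Et aux1[OF uv lp0] .
        then show ?case by (simp add: K_def C_def)
      qed
      have blt: "b / lp < 1" using neg pos b_lp by (simp add: divide_less_eq)
      show ?thesis
      proof (cases "C > 0")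
        case True
        have "filterlim (\<lambda>t. exp(-(lp*t)) * C + b / lp + K * exp(-(\<beta>*t))) at_top at_top"
          by (rule l3[OF neg True pos(1)])
        then show ?thesis by (rule filterlim_cong[OF refl refl eq, THEN iffD1])
      next
        case False
        have "((\<lambda>t. b / lp + K * exp(-(\<beta>*t))) \<longlongrightarrow> b / lp) at_top"
          by (rule l5[OF pos(1)])
        then have e1: "eventually (\<lambda>t. b / lp + K * exp(-(\<beta>*t)) < 1) at_top"
          using blt by (rule order_tendstoD)
        have "eventually (\<lambda>t. b / lp + K * exp(-(\<beta>*t)) < 1 \<and>
            exp(-(lp*t)) * C + b / lp + K * exp(-(\<beta>*t)) = 1 / I t \<and> t \<ge> 0) at_top"
          using e1 eq ev by (intro eventually_conj)
        then obtain N where N: "\<forall>n\<ge>N. b / lp + K * exp(-(\<beta>*n)) < 1 \<and>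
            exp(-(lp*n)) * C + b / lp + K * exp(-(\<beta>*n)) = 1 / I n \<and> n \<ge> 0"
          unfolding eventually_at_top_linorder by blast
        then have N1: "b / lp + K * exp(-(\<beta>*N)) < 1" and N2: "exp(-(lp*N)) * C + b / lp + K * exp(-(\<beta>*N)) = 1 / I N"
          and N3: "N \<ge> 0" by auto
        have "exp(-(lp*N)) * C \<le> 0" using False by (simp add: mult_nonneg_nonpos)
        then have "1 / I N < 1" using N1 N2 by linarith
        then have False using inv_ge1[OF N3] by linarith
        then show ?thesis by simp
      qed
    qed
    then have "((\<lambda>t. inverse (1 / I t)) \<longlongrightarrow> 0) at_top" by (rule tendsto_inverse_0_at_top)
    then show ?thesis using False unfolding L_def by simp
  qed
  have ee: "((\<lambda>t. exp(-(\<beta>*t))) \<longlongrightarrow> 0) at_top" by (rule l6[OF pos(1)])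
  have "((\<lambda>t. (I t * (xa + q0 * exp(-(\<beta>*t))), I t * (1 - xa - q0 * exp(-(\<beta>*t))))) \<longlongrightarrow>
          (L * (xa + q0 * 0), L * (1 - xa - q0 * 0))) at_top"
    by (intro tendsto_intros IL ee)
  then have lim: "((\<lambda>t. (I t * (xa + q0 * exp(-(\<beta>*t))), I t * (1 - xa - q0 * exp(-(\<beta>*t))))) \<longlongrightarrow>
          (xa * L, (1 - xa) * L)) at_top" by (simp add: mult.commute)
  have "eventually (\<lambda>t. (I t * (xa + q0 * exp(-(\<beta>*t))), I t * (1 - xa - q0 * exp(-(\<beta>*t)))) = i t) at_top"
    using ev
  proof eventually_elim
    case (elim t)
    have "i t = (ia t, ir t)" by (simp add: ia_def ir_def)
    then show ?case using iaeq[OF elim] ireq[OF elim] by simp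
  qed
  with lim have "(i \<longlongrightarrow> (xa * L, (1 - xa) * L)) at_top" by (rule Lim_transform_eventually)
  moreover have "L = (if \<beta> - \<beta>a * xa - \<alpha> > 0 then (\<beta> - \<beta>a * xa - \<alpha>) / (\<beta> - \<beta>a * xa) else 0)"
    unfolding L_def lp_def b_def ..
  ultimately show ?thesis by blast
qed


lemma Fa_ray: "Fa \<beta> \<beta>a \<alpha> xa (xa * s) ((1 - xa) * s) = xa * s * ((\<beta> - \<beta>a * xa) * (1 - s) - \<alpha>)"
  unfolding Fa_def by (simp add: algebra_simps)

lemma Fr_ray: "Fr \<beta> \<beta>a \<alpha> xa (xa * s) ((1 - xa) * s) = (1 - xa) * s * ((\<beta> - \<beta>a * xa) * (1 - s) - \<alpha>)"
  unfolding Fr_def by (simp add: algebra_simps)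

lemma D_id: "(1 - xa) * Fa \<beta> \<beta>a \<alpha> xa a r - xa * Fr \<beta> \<beta>a \<alpha> xa a r
   = - ((1 - xa) * a - xa * r) * (\<beta> * (a + r) + \<beta>a * (xa - a) + \<alpha>)"
  unfolding Fa_def Fr_def by (simp add: algebra_simps)

lemma zero_eq:
  assumes "0 \<le> xa" "xa \<le> 1"
  shows "(0, 0) \<in> equilibria \<beta> \<beta>a \<alpha> xa"
  using assms unfolding equilibria_def Gamma_def Fa_def Fr_def by auto

lemma logistic_sol:
  fixes \<beta> \<beta>a \<alpha> xa :: real
  assumes pos: "\<beta> > 0" "\<beta>a > 0" "\<alpha> > 0" "0 \<le> xa" "xa \<le> 1"
    and lp: "\<beta> - \<beta>a * xa - \<alpha> > 0"
  defines "b \<equiv> \<beta> - \<beta>a * xa"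
  defines "K \<equiv> (\<beta> - \<beta>a * xa - \<alpha>) / b"
  defines "s \<equiv> (\<lambda>t::real. K / (1 + exp (- ((\<beta> - \<beta>a * xa - \<alpha>) * t))))"
  shows "is_solution \<beta> \<beta>a \<alpha> xa (xa * (K / 2), (1 - xa) * (K / 2)) (\<lambda>t. (xa * s t, (1 - xa) * s t))"
proof -
  define lp where "lp = \<beta> - \<beta>a * xa - \<alpha>"
  have lpp: "lp > 0" using lp by (simp add: lp_def)
  have bp: "b > 0" using lpp pos by (simp add: b_def lp_def)
  have bK: "b * K = lp" using bp by (simp add: K_def lp_def)
  have s0: "s 0 = K / 2" by (simp add: s_def)
  have ds: "(s has_real_derivative s t * (lp - b * s t)) (at t within {0..})" for t
  proof -
    define e where "e = exp (- (lp * t))"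
    have ep: "e > 0" by (simp add: e_def)
    have "(s has_real_derivative K * (e * lp) / ((1 + e) * (1 + e))) (at t within {0..})"
    proof -
      have nz: "1 + exp (- (lp * t)) \<noteq> 0" using exp_gt_zero[of "- (lp * t)"] by linarith
      show ?thesis unfolding s_def lp_def[symmetric] e_def
        using nz by (auto intro!: derivative_eq_intros)
    qed
    moreover have "s t * (lp - b * s t) = K * (e * lp) / ((1 + e) * (1 + e))"
    proof -
      have st: "s t = K / (1 + e)" by (simp add: s_def e_def lp_def)
      have "b * s t = lp / (1 + e)" unfolding st using bK by simp
      then have "lp - b * s t = lp * e / (1 + e)" using ep by (simp add: field_simps)
      then show ?thesis unfolding st using ep by (simp add: field_simps)
    qed
    ultimately show ?thesis by simp
  qed
  show ?thesis unfolding is_solution_def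
  proof (intro conjI allI impI)
    show "(xa * s 0, (1 - xa) * s 0) = (xa * (K / 2), (1 - xa) * (K / 2))" using s0 by simp
  next
    fix t :: real assume "0 \<le> t"
    have eq: "s t * (lp - b * s t) = s t * ((\<beta> - \<beta>a * xa) * (1 - s t) - \<alpha>)"
      by (simp add: b_def lp_def algebra_simps)
    have d1: "((\<lambda>t. xa * s t) has_real_derivative xa * (s t * (lp - b * s t))) (at t within {0..})"
      by (rule DERIV_cmult[OF ds])
    have d2: "((\<lambda>t. (1 - xa) * s t) has_real_derivative (1 - xa) * (s t * (lp - b * s t))) (at t within {0..})"
      by (rule DERIV_cmult[OF ds])
    have "((\<lambda>t. (xa * s t, (1 - xa) * s t)) has_vector_derivative
        (xa * (s t * (lp - b * s t)), (1 - xa) * (s t * (lp - b * s t)))) (at t within {0..})"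
      by (intro has_vector_derivative_Pair d1[unfolded has_real_derivative_iff_has_vector_derivative]
          d2[unfolded has_real_derivative_iff_has_vector_derivative])
    then show "((\<lambda>t. (xa * s t, (1 - xa) * s t)) has_vector_derivative
        (Fa \<beta> \<beta>a \<alpha> xa (fst (xa * s t, (1 - xa) * s t)) (snd (xa * s t, (1 - xa) * s t)),
         Fr \<beta> \<beta>a \<alpha> xa (fst (xa * s t, (1 - xa) * s t)) (snd (xa * s t, (1 - xa) * s t)))) (at t within {0..})"
      unfolding fst_conv snd_conv Fa_ray Fr_ray eq by (simp add: mult.assoc)
  qed
qed

theorem theorem2:
  fixes \<beta> \<beta>a \<alpha> xa :: real
  assumes "\<beta> > 0" and "\<beta>a > 0" and "\<alpha> > 0" and "0 \<le> xa" and "xa \<le> 1"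
  shows "(GAS \<beta> \<beta>a \<alpha> xa (0, 0) \<longleftrightarrow> \<beta> / \<alpha> \<le> 1 + \<beta>a * xa / \<alpha>)
    \<and> (\<beta> / \<alpha> > 1 + \<beta>a * xa / \<alpha> \<longrightarrow> 0 < xa \<longrightarrow> xa < 1 \<longrightarrow>
          (let lp = \<beta> - \<beta>a * xa - \<alpha>;
               p = (xa * (lp / (lp + \<alpha>)), (1 - xa) * (lp / (lp + \<alpha>)))
           in (\<forall>q \<in> interior_pts xa. q \<in> equilibria \<beta> \<beta>a \<alpha> xa \<longleftrightarrow> q = p)
              \<and> p \<in> interior_pts xa \<and> GAS \<beta> \<beta>a \<alpha> xa p))"
proof -
  note pos = assms
  define lp where "lp = \<beta> - \<beta>a * xa - \<alpha>"
  define b where "b = \<beta> - \<beta>a * xa"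
  have b_lp: "b = lp + \<alpha>" by (simp add: b_def lp_def)
  have cond: "\<beta> / \<alpha> \<le> 1 + \<beta>a * xa / \<alpha> \<longleftrightarrow> lp \<le> 0"
    using pos(3) by (simp add: lp_def field_simps)
  have cond2: "\<beta> / \<alpha> > 1 + \<beta>a * xa / \<alpha> \<longleftrightarrow> lp > 0"
    using cond by linarith
  have Z: "(0, 0) \<in> equilibria \<beta> \<beta>a \<alpha> xa" using zero_eq pos by blast
  have nz: "i0 \<noteq> (0, 0)" if "i0 \<in> Gamma xa - equilibria \<beta> \<beta>a \<alpha> xa" for i0
    using that Z by auto
  have lim: "\<exists>L. (L = (if lp > 0 then lp / (lp + \<alpha>) else 0)) \<and> (i \<longlongrightarrow> (xa * L, (1 - xa) * L)) at_top"
    if "i0 \<in> Gamma xa - equilibria \<beta> \<beta>a \<alpha> xa" "is_solution \<beta> \<beta>a \<alpha> xa i0 i" for i0 i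
  proof -
    from sol_main[OF pos that(2) _ nz[OF that(1)]] that(1)
    obtain L where "L = (if \<beta> - \<beta>a * xa - \<alpha> > 0 then (\<beta> - \<beta>a * xa - \<alpha>) / (\<beta> - \<beta>a * xa) else 0)"
      "(i \<longlongrightarrow> (xa * L, (1 - xa) * L)) at_top" by auto
    moreover have "\<beta> - \<beta>a * xa = lp + \<alpha>" by (simp add: lp_def)
    ultimately show ?thesis unfolding lp_def[symmetric] by auto
  qed
  have P1: "GAS \<beta> \<beta>a \<alpha> xa (0, 0) \<longleftrightarrow> lp \<le> 0"
  proof
    assume G: "GAS \<beta> \<beta>a \<alpha> xa (0, 0)"
    show "lp \<le> 0"
    proof (rule ccontr)
      assume "\<not> lp \<le> 0"
      then have lpp: "lp > 0" by simp
      define K where "K = lp / b"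
      have bp: "b > 0" using lpp pos b_lp by simp
      have K01: "0 < K" "K < 1" using lpp bp pos(3) b_lp by (auto simp: K_def)
      define s where "s = (\<lambda>t::real. K / (1 + exp (- ((\<beta> - \<beta>a * xa - \<alpha>) * t))))"
      define i0 where "i0 = (xa * (K / 2), (1 - xa) * (K / 2))"
      have sol: "is_solution \<beta> \<beta>a \<alpha> xa i0 (\<lambda>t. (xa * s t, (1 - xa) * s t))"
        unfolding i0_def s_def K_def lp_def b_def
        by (rule logistic_sol[OF pos]) (use lpp in \<open>simp add: lp_def\<close>)
      have i0G: "i0 \<in> Gamma xa"
      proof -
        have k2: "0 \<le> K / 2" "K / 2 \<le> 1" using K01 by auto
        have "0 \<le> xa * (K / 2)" "0 \<le> (1 - xa) * (K / 2)"
          using k2 pos(4,5) by auto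
        moreover have "xa * (K / 2) \<le> xa" by (rule mult_left_le[OF k2(2)]) (use pos in simp)
        moreover have "(1 - xa) * (K / 2) \<le> 1 - xa" by (rule mult_left_le[OF k2(2)]) (use pos in simp)
        ultimately have "0 \<le> xa * (K / 2)" "0 \<le> (1 - xa) * (K / 2)" "xa * (K / 2) \<le> xa" "(1 - xa) * (K / 2) \<le> 1 - xa"
          by auto
        then show ?thesis by (simp add: i0_def Gamma_def mem_Times_iff)
      qed
      have i0E: "i0 \<notin> equilibria \<beta> \<beta>a \<alpha> xa"
      proof
        assume "i0 \<in> equilibria \<beta> \<beta>a \<alpha> xa"
        then have F: "Fa \<beta> \<beta>a \<alpha> xa (xa * (K / 2)) ((1 - xa) * (K / 2)) = 0"
            "Fr \<beta> \<beta>a \<alpha> xa (xa * (K / 2)) ((1 - xa) * (K / 2)) = 0"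
          unfolding equilibria_def i0_def by auto
        have nzf: "b * (1 - K / 2) - \<alpha> \<noteq> 0"
        proof -
          have "b * (1 - K / 2) - \<alpha> = lp / 2" using bp b_lp by (simp add: K_def field_simps)
          then show ?thesis using lpp by simp
        qed
        have "xa = 0" using F(1) K01 nzf unfolding Fa_ray b_def by simp
        moreover have "1 - xa = 0" using F(2) K01 nzf unfolding Fr_ray b_def by simp
        ultimately show False by linarith
      qed
      have i0nz: "i0 \<in> Gamma xa - equilibria \<beta> \<beta>a \<alpha> xa" using i0G i0E by simp
      have l0: "((\<lambda>t. (xa * s t, (1 - xa) * s t)) \<longlongrightarrow> (0, 0)) at_top"
        using G i0nz sol unfolding GAS_def by blast
      obtain L where L: "L = (if lp > 0 then lp / (lp + \<alpha>) else 0)"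
        "((\<lambda>t. (xa * s t, (1 - xa) * s t)) \<longlongrightarrow> (xa * L, (1 - xa) * L)) at_top"
        using lim[OF i0nz sol] by blast
      have "(xa * L, (1 - xa) * L) = (0, 0)" using tendsto_unique[OF _ L(2) l0] by simp
      moreover have "L > 0" using L(1) lpp pos(3) by simp
      ultimately have "xa = 0" "1 - xa = 0" by auto
      then show False by linarith
    qed
  next
    assume lpn: "lp \<le> 0"
    show "GAS \<beta> \<beta>a \<alpha> xa (0, 0)" unfolding GAS_def
    proof (intro conjI ballI allI impI Z)
      fix i0 i assume "i0 \<in> Gamma xa - equilibria \<beta> \<beta>a \<alpha> xa" "is_solution \<beta> \<beta>a \<alpha> xa i0 i"
      from lim[OF this] lpn show "(i \<longlongrightarrow> (0, 0)) at_top" by auto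
    qed
  qed
  have P2: "(let lp = \<beta> - \<beta>a * xa - \<alpha>;
               p = (xa * (lp / (lp + \<alpha>)), (1 - xa) * (lp / (lp + \<alpha>)))
           in (\<forall>q \<in> interior_pts xa. q \<in> equilibria \<beta> \<beta>a \<alpha> xa \<longleftrightarrow> q = p)
              \<and> p \<in> interior_pts xa \<and> GAS \<beta> \<beta>a \<alpha> xa p)"
    if lpp: "lp > 0" and x0: "0 < xa" and x1: "xa < 1"
  proof -
    define K where "K = lp / (lp + \<alpha>)"
    have K01: "0 < K" "K < 1" using lpp pos(3) by (auto simp: K_def)
    have bK: "b * (1 - K) - \<alpha> = 0" using lpp pos(3) b_lp by (simp add: K_def field_simps)
    have pE: "(xa * K, (1 - xa) * K) \<in> equilibria \<beta> \<beta>a \<alpha> xa"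
      unfolding equilibria_def Gamma_def using K01 x0 x1 bK
      by (auto simp: mem_Times_iff Fa_ray Fr_ray b_def[symmetric] less_imp_le mult_le_cancel_left1 mult_le_cancel_right1)
    have pI: "(xa * K, (1 - xa) * K) \<in> interior_pts xa"
      unfolding interior_pts_def using K01 x0 x1 by (auto simp: mem_Times_iff)
    have uniq: "q \<in> equilibria \<beta> \<beta>a \<alpha> xa \<longleftrightarrow> q = (xa * K, (1 - xa) * K)" if q: "q \<in> interior_pts xa" for q
    proof
      assume qE: "q \<in> equilibria \<beta> \<beta>a \<alpha> xa"
      obtain a r where qar: "q = (a, r)" by (cases q)
      have ar: "0 < a" "a < xa" "0 < r" "r < 1 - xa" using q unfolding qar interior_pts_def by auto
      have F: "Fa \<beta> \<beta>a \<alpha> xa a r = 0" "Fr \<beta> \<beta>a \<alpha> xa a r = 0" using qE unfolding qar equilibria_def by auto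
      have cpos: "\<beta> * (a + r) + \<beta>a * (xa - a) + \<alpha> > 0" using ar pos by (intro add_pos_pos add_nonneg_pos) auto
      have "- ((1 - xa) * a - xa * r) * (\<beta> * (a + r) + \<beta>a * (xa - a) + \<alpha>) = 0"
        using D_id[of xa \<beta> \<beta>a \<alpha> a r] F by simp
      then have D0: "(1 - xa) * a - xa * r = 0" using cpos by simp
      define I where "I = a + r"
      have aI: "a = xa * I" using D0 unfolding I_def by (simp add: algebra_simps)
      have rI: "r = (1 - xa) * I" using aI unfolding I_def by (simp add: algebra_simps)
      have Ip: "I > 0" using ar unfolding I_def by simp
      have "xa * I * (b * (1 - I) - \<alpha>) = 0" using F(1) unfolding aI rI Fa_ray b_def .
      then have "b * (1 - I) - \<alpha> = 0" using x0 Ip by simp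
      then have "I = K" using b_lp lpp pos(3) unfolding K_def by (simp add: field_simps)
      then show "q = (xa * K, (1 - xa) * K)" unfolding qar using aI rI by simp
    next
      assume "q = (xa * K, (1 - xa) * K)"
      then show "q \<in> equilibria \<beta> \<beta>a \<alpha> xa" using pE by simp
    qed
    have G: "GAS \<beta> \<beta>a \<alpha> xa (xa * K, (1 - xa) * K)" unfolding GAS_def
    proof (intro conjI ballI allI impI pE)
      fix i0 i assume "i0 \<in> Gamma xa - equilibria \<beta> \<beta>a \<alpha> xa" "is_solution \<beta> \<beta>a \<alpha> xa i0 i"
      from lim[OF this] lpp show "(i \<longlongrightarrow> (xa * K, (1 - xa) * K)) at_top" by (auto simp: K_def)
    qed
    show ?thesis unfolding Let_def lp_def[symmetric] K_def[symmetric] using uniq pI G by blast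
  qed
  show ?thesis using P1 P2 cond cond2 unfolding lp_def by blast
qed

end
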